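(* Let $K\subset\mathbb{R}^d$ be a convex body (not necessarily centrally symmetric). Let $\mathcal{K}=\{o_i+\tau_iK: i=1,\dots,n\}$ with $o_i\in\mathbb{R}^d$ and $\tau_1,\dots,\tau_n>0$ be a non-separable family of positive homothetic copies of $K$. Then there is a translate of $\frac{d+1}{2}\left(\sum_{i=1}^n\tau_i\right)K$ that covers $\bigcup\mathcal{K}$.
   Context: A convex body is a compact convex set with nonempty interior. A family $\mathcal{K}$ of convex bodies in $\mathbb{R}^d$ is called non-separable if every hyperplane $H$ that intersects $\operatorname{conv}\bigcup\mathcal{K}$ intersects some member of $\mathcal{K}$. *)

theory Defs
  imports "HOL-Analysis.Analysis"
begin

definition convex_body :: "'a::euclidean_space set \<Rightarrow> bool" where
  "convex_body K \<longleftrightarrow> compact K \<and> convex K \<and> interior K \<noteq> {}"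

definition hyperplane :: "'a::euclidean_space set \<Rightarrow> bool" where
  "hyperplane H \<longleftrightarrow> (\<exists>a b. a \<noteq> 0 \<and> H = {x. a \<bullet> x = b})"

definition non_separable :: "'a::euclidean_space set set \<Rightarrow> bool" where
  "non_separable \<K> \<longleftrightarrow>
     (\<forall>H. hyperplane H \<and> H \<inter> convex hull (\<Union>\<K>) \<noteq> {} \<longrightarrow> (\<exists>C\<in>\<K>. H \<inter> C \<noteq> {}))"

definition homothet :: "'a::real_vector \<Rightarrow> real \<Rightarrow> 'a set \<Rightarrow> 'a set" where
  "homothet o' \<tau> K = (\<lambda>x. o' + \<tau> *\<^sub>R x) ` K"

end

theory Submission imports Defs begin

lemma interval_lemma:
  fixes I :: "'i set" and e \<tau> :: "'i \<Rightarrow> real"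
  assumes "finite I" "I \<noteq> {}" "w \<ge> 0" "\<forall>i\<in>I. \<tau> i \<ge> 0"
   "\<forall>i\<in>I. m \<le> e i - \<tau> i * w \<and> e i + \<tau> i * w \<le> M"
   "\<exists>i\<in>I. e i - \<tau> i * w = m" "\<exists>i\<in>I. e i + \<tau> i * w = M"
   "\<forall>s. m \<le> s \<and> s \<le> M \<longrightarrow> (\<exists>i\<in>I. e i - \<tau> i * w \<le> s \<and> s \<le> e i + \<tau> i * w)"
  shows "M - m \<le> 2 * w * sum \<tau> I \<and> sum \<tau> I * (M - w * sum \<tau> I) \<le> (\<Sum>i\<in>I. \<tau> i * e i)"
  using assms
proof (induction "card I" arbitrary: I m rule: less_induct)
  case less
  show ?case
  proof (cases "card I = 1")
    case True
    then obtain j where I: "I = {j}" using card_1_singletonE by blast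
    then have "e j - \<tau> j * w = m" "e j + \<tau> j * w = M" using less.prems by auto
    then have M: "M = m + 2 * w * \<tau> j" and ej: "e j = m + w * \<tau> j" by (simp_all add: algebra_simps)
    show ?thesis unfolding I M by (simp add: ej algebra_simps)
  next
    case False
    then have c2: "card I \<ge> 2" using less.prems(1,2)
      by (metis One_nat_def Suc_1 Suc_leI card_gt_0_iff le_neq_implies_less)
    define B where "B = Min ((\<lambda>i. e i + \<tau> i * w) ` I)"
    have "B \<in> (\<lambda>i. e i + \<tau> i * w) ` I" unfolding B_def using less.prems(1,2) by simp
    then obtain j where j: "j \<in> I" "e j + \<tau> j * w = B" by auto
    have Bmin: "\<And>i. i \<in> I \<Longrightarrow> B \<le> e i + \<tau> i * w" unfolding B_def using less.prems(1) by simp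
    define I' where "I' = I - {j}"
    have fI': "finite I'" using less.prems(1) I'_def by simp
    have cI': "card I' < card I" "card I' \<ge> 1" using j c2 less.prems(1) I'_def by auto
    then have neI': "I' \<noteq> {}" by auto
    define m' where "m' = Min ((\<lambda>i. e i - \<tau> i * w) ` I')"
    have "m' \<in> (\<lambda>i. e i - \<tau> i * w) ` I'" unfolding m'_def using fI' neI' by simp
    then obtain k where k: "k \<in> I'" "e k - \<tau> k * w = m'" by auto
    have m'min: "\<And>i. i \<in> I' \<Longrightarrow> m' \<le> e i - \<tau> i * w" unfolding m'_def using fI' by simp
    have mm': "m \<le> m'" using k less.prems(5) I'_def by auto
    have MI': "\<exists>i\<in>I'. e i + \<tau> i * w = M"
    proof -
      obtain i0 where i0: "i0 \<in> I" "e i0 + \<tau> i0 * w = M" using less.prems(7) by auto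
      show ?thesis
      proof (cases "i0 = j")
        case False then show ?thesis using i0 I'_def by auto
      next
        case True
        have "e k + \<tau> k * w \<ge> M" using Bmin[of k] k j i0 True I'_def by auto
        moreover have "e k + \<tau> k * w \<le> M" using less.prems(5) k I'_def by auto
        ultimately show ?thesis using k by force
      qed
    qed
    have cov': "\<forall>s. m' \<le> s \<and> s \<le> M \<longrightarrow> (\<exists>i\<in>I'. e i - \<tau> i * w \<le> s \<and> s \<le> e i + \<tau> i * w)"
    proof (intro allI impI)
      fix s assume s: "m' \<le> s \<and> s \<le> M"
      have "m \<le> s \<and> s \<le> M" using s mm' by auto
      then obtain i where i: "i \<in> I" "e i - \<tau> i * w \<le> s" "s \<le> e i + \<tau> i * w"
        using less.prems(8) by blast
      show "\<exists>i\<in>I'. e i - \<tau> i * w \<le> s \<and> s \<le> e i + \<tau> i * w"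
      proof (cases "i = j")
        case False then show ?thesis using i I'_def by auto
      next
        case True
        have "s \<le> e k + \<tau> k * w" using Bmin[of k] k i True j I'_def by auto
        then show ?thesis using k s by auto
      qed
    qed
    have IH: "M - m' \<le> 2 * w * sum \<tau> I' \<and> sum \<tau> I' * (M - w * sum \<tau> I') \<le> (\<Sum>i\<in>I'. \<tau> i * e i)"
      apply (rule less.hyps[OF cI'(1) fI' neI' less.prems(3)])
      using less.prems(4,5) I'_def m'min MI' k cov' by auto
    have bjm': "e j + \<tau> j * w \<ge> m'"
    proof (rule ccontr)
      assume nb: "\<not> ?thesis"
      define s where "s = (e j + \<tau> j * w + m') / 2"
      have "m \<le> e j - \<tau> j * w" using less.prems(5) j by auto
      moreover have "e j - \<tau> j * w \<le> e j + \<tau> j * w" using less.prems(3,4) j by auto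
      moreover have "\<tau> k * w \<ge> 0" using less.prems(3,4) k I'_def by auto
      moreover have "m' \<le> M" using less.prems(5) k I'_def calculation(3) by force
      ultimately have "m \<le> s \<and> s \<le> M" using nb s_def by auto
      then obtain i where i: "i \<in> I" "e i - \<tau> i * w \<le> s" "s \<le> e i + \<tau> i * w"
        using less.prems(8) by blast
      have "i \<noteq> j" using i(3) nb s_def by (auto simp: mult.commute)
      then have "m' \<le> e i - \<tau> i * w" using m'min i I'_def by auto
      then show False using i(2) nb s_def by auto
    qed
    have sumI: "sum \<tau> I = \<tau> j + sum \<tau> I'" "(\<Sum>i\<in>I. \<tau> i * e i) = \<tau> j * e j + (\<Sum>i\<in>I'. \<tau> i * e i)"
      using less.prems(1) j I'_def by (auto simp: sum.remove)
    have tj: "\<tau> j \<ge> 0" using less.prems(4) j by auto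
    have A1: "M - m \<le> 2 * w * sum \<tau> I"
    proof -
      obtain i where i: "i \<in> I" "e i - \<tau> i * w = m" using less.prems(6) by auto
      show ?thesis
      proof (cases "i = j")
        case True
        have "w * \<tau> j \<ge> 0" using tj less.prems(3) by simp
        then show ?thesis using IH bjm' i True sumI by (auto simp: algebra_simps)
      next
        case False
        then have "m' \<le> m" using m'min i I'_def by auto
        moreover have "w * \<tau> j \<ge> 0" using tj less.prems(3) by simp
        ultimately show ?thesis using IH sumI mm' by (auto simp: algebra_simps)
      qed
    qed
    have "e j + \<tau> j * w \<ge> M - 2 * w * sum \<tau> I'" using IH bjm' by linarith
    then have P: "\<tau> j * (e j + \<tau> j * w) \<ge> \<tau> j * (M - 2 * w * sum \<tau> I')"
      using tj mult_left_mono by blast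
    have A2: "sum \<tau> I * (M - w * sum \<tau> I) \<le> (\<Sum>i\<in>I. \<tau> i * e i)"
      using IH P unfolding sumI by (simp add: algebra_simps)
    show ?thesis using A1 A2 by simp
  qed
qed


lemma avg_in:
  fixes K :: "'a::real_vector set"
  assumes "convex K" "finite Y" "Y \<subseteq> K" "k0 \<in> K" "card Y + m > 0"
  shows "(1 / real (card Y + m)) *\<^sub>R (\<Sum>Y + real m *\<^sub>R k0) \<in> K"
  using assms(2,3,5)
proof (induction Y arbitrary: m rule: finite_induct)
  case empty
  then show ?case using assms(4) by simp
next
  case (insert y Y)
  have yK: "y \<in> K" using insert by auto
  show ?case
  proof (cases "card Y + m = 0")
    case True
    then have "Y = {}" "m = 0" using insert by auto
    then show ?thesis using yK by simp
  next
    case False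
    define N where "N = real (card Y + m)"
    have N: "N > 0" using False N_def by linarith
    have IH: "(1 / N) *\<^sub>R (\<Sum>Y + real m *\<^sub>R k0) \<in> K" using insert.IH[of m] insert.prems False unfolding N_def by auto
    have c: "card (insert y Y) + m = card Y + m + 1" using insert by simp
    have eq: "(1 / real (card (insert y Y) + m)) *\<^sub>R (\<Sum>(insert y Y) + real m *\<^sub>R k0)
       = (1/(N+1)) *\<^sub>R y + (N/(N+1)) *\<^sub>R ((1 / N) *\<^sub>R (\<Sum>Y + real m *\<^sub>R k0))"
      using insert N unfolding c N_def[symmetric]
      by (simp add: scaleR_add_right N_def add_ac)
    show ?thesis unfolding eq
      by (rule convexD[OF assms(1) yK IH]) (use N in \<open>auto simp: field_simps\<close>)
  qed
qed

lemma asym_point: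
  fixes K :: "'a::euclidean_space set"
  assumes "compact K" "convex K" "K \<noteq> {}"
  shows "\<exists>z\<in>K. \<forall>x\<in>K. \<exists>y\<in>K. real (DIM('a)+1) *\<^sub>R z = x + real DIM('a) *\<^sub>R y"
proof -
  define d where "d = DIM('a)"
  have d1: "d \<ge> 1" unfolding d_def by (simp add: Suc_leI)
  define S where "S x = (\<lambda>y. (1 / real (d+1)) *\<^sub>R (x + real d *\<^sub>R y)) ` K" for x
  obtain k0 where k0: "k0 \<in> K" using assms(3) by auto
  have SK: "S x \<subseteq> K" if "x \<in> K" for x
  proof
    fix z assume "z \<in> S x"
    then obtain y where y: "y \<in> K" "z = (1 / real (d+1)) *\<^sub>R (x + real d *\<^sub>R y)" unfolding S_def by auto
    have "z = (1 / real (d+1)) *\<^sub>R x + (real d / real (d+1)) *\<^sub>R y" using y(2) by (simp add: scaleR_add_right)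
    then show "z \<in> K" using convexD[OF assms(2) that y(1), of "1 / real (d+1)" "real d / real (d+1)"]
      by (simp add: field_simps)
  qed
  have convS: "convex (S x)" for x
  proof -
    have "S x = (\<lambda>y. (1 / real (d+1)) *\<^sub>R x + (real d / real (d+1)) *\<^sub>R y) ` K"
      unfolding S_def by (simp add: scaleR_add_right)
    then show ?thesis using convex_affinity[OF assms(2)] by simp
  qed
  have W: "\<exists>z\<in>K. \<forall>x\<in>X. z \<in> S x" if X: "finite X" "X \<subseteq> K" "card X \<le> d+1" for X
  proof -
    define m where "m = d + 1 - card X"
    define z where "z = (1 / real (card X + m)) *\<^sub>R (\<Sum>X + real m *\<^sub>R k0)"
    have cm: "card X + m = d + 1" using X m_def by simp
    have zK: "z \<in> K" unfolding z_def by (rule avg_in[OF assms(2) X(1,2) k0]) (use cm in auto)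
    have "z \<in> S x" if x: "x \<in> X" for x
    proof -
      define y where "y = (1 / real (card (X - {x}) + m)) *\<^sub>R (\<Sum>(X - {x}) + real m *\<^sub>R k0)"
      have cm': "card (X - {x}) + m = d" using cm x X(1) card_gt_0_iff[of X] by (auto simp add: card_Diff_singleton)
      have yK: "y \<in> K" unfolding y_def using X x by (intro avg_in[OF assms(2) _ _ k0]) (use cm' d1 in auto)
      have sX: "\<Sum>X = x + \<Sum>(X - {x})" using X(1) x by (simp add: sum.remove)
      have "real d *\<^sub>R y = \<Sum>(X - {x}) + real m *\<^sub>R k0" unfolding y_def cm' using d1 by simp
      then have "z = (1 / real (d+1)) *\<^sub>R (x + real d *\<^sub>R y)"
        unfolding z_def cm sX by (simp add: add.assoc)
      then show ?thesis unfolding S_def using yK by blast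
    qed
    then show ?thesis using zK by blast
  qed
  have W': "K \<inter> \<Inter>F' \<noteq> {}" if F': "finite F'" "F' \<subseteq> S ` K" "card F' \<le> d+1" for F'
  proof -
    define X where "X = (\<lambda>T. SOME x. x \<in> K \<and> S x = T) ` F'"
    have sel: "(SOME x. x \<in> K \<and> S x = T) \<in> K \<and> S (SOME x. x \<in> K \<and> S x = T) = T" if "T \<in> F'" for T
      by (rule someI_ex) (use that F'(2) in blast)
    have XK: "X \<subseteq> K" using sel X_def by auto
    have SX: "\<forall>T\<in>F'. \<exists>x\<in>X. S x = T" using sel X_def by blast
    have "card X \<le> card F'" unfolding X_def by (rule card_image_le[OF F'(1)])
    then obtain z where "z \<in> K" "\<forall>x\<in>X. z \<in> S x" using W[of X] XK F' X_def by auto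
    then have "z \<in> K \<inter> \<Inter>F'" using SX by auto
    then show ?thesis by blast
  qed
  have "K \<inter> \<Inter>(S ` K) \<noteq> {}"
  proof (rule compact_imp_fip[OF assms(1)])
    fix T assume "T \<in> S ` K"
    then show "closed T" unfolding S_def
      by (auto intro!: compact_imp_closed compact_continuous_image assms(1) continuous_intros)
  next
    fix F' assume F': "finite F'" "F' \<subseteq> S ` K"
    show "K \<inter> \<Inter>F' \<noteq> {}"
    proof (cases "card F' \<le> d+1")
      case True then show ?thesis using W' F' by blast
    next
      case False
      have "\<Inter>F' \<noteq> {}"
      proof (rule Helly)
        show "DIM('a) + 1 \<le> card F'" using False d_def by simp
        show "\<forall>s\<in>F'. convex s" using F'(2) convS by auto
      next
        fix t assume "t \<subseteq> F'" "card t = DIM('a) + 1"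
        then show "\<Inter>t \<noteq> {}" using W'[of t] F' d_def finite_subset by fastforce
      qed
      moreover have "\<Inter>F' \<subseteq> K" using False F' SK by (metis Inf_lower2 card.empty imageE le0 subset_eq ex_in_conv)
      ultimately show ?thesis by blast
    qed
  qed
  then obtain z where z: "z \<in> K" "\<forall>x\<in>K. z \<in> S x" by blast
  have "\<forall>x\<in>K. \<exists>y\<in>K. real (DIM('a)+1) *\<^sub>R z = x + real DIM('a) *\<^sub>R y"
  proof
    fix x assume "x \<in> K"
    then obtain y where y: "y \<in> K" "z = (1 / real (d+1)) *\<^sub>R (x + real d *\<^sub>R y)" using z unfolding S_def by blast
    have "real (DIM('a)+1) *\<^sub>R z = x + real DIM('a) *\<^sub>R y" unfolding y(2) d_def by simp
    then show "\<exists>y\<in>K. real (DIM('a)+1) *\<^sub>R z = x + real DIM('a) *\<^sub>R y" using y(1) by blast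
  qed
  then show ?thesis using z(1) by blast
qed

lemma arith_final:
  fixes T q d ux uc h g v :: real
  assumes "T > 0" "0 \<le> q" "q \<le> T" "d \<ge> 1"
   "T*ux \<le> T*uc + q*T*(h+g)/2 + T^2*(h-g)/2"
   "(d+1) * v \<le> g + d*h" "v \<le> h"
  shows "ux \<le> uc - ((d+1)/2*T - q) * v + (d+1)/2*T*h"
proof -
  have "T*(2*ux) \<le> T*(2*uc + q*(h+g) + T*(h-g))" using assms(5) by (simp add: field_simps power2_eq_square)
  then have A: "2*ux \<le> 2*uc + q*(h+g) + T*(h-g)" using assms(1) by simp
  have B: "(T-q) * (-g) \<le> (T-q) * (d*h - (d+1) * v)" using assms(3,6) by (intro mult_left_mono) auto
  have C: "0 \<le> (d-1)*q * (h - v)" using assms(2,4,7) by simp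
  have "2*ux \<le> 2*uc - ((d+1)*T - 2*q) * v + (d+1)*T*h"
    using A B C by (simp add: algebra_simps)
  then show ?thesis by (simp add: field_simps)
qed

lemma support_bound:
  fixes K :: "'a::euclidean_space set"
    and o' :: "nat \<Rightarrow> 'a" and \<tau> :: "nat \<Rightarrow> real" and n :: nat
  assumes cK: "compact K" and cvK: "convex K" and neK: "K \<noteq> {}"
    and tpos: "\<And>i. i < n \<Longrightarrow> \<tau> i > 0"
    and ns: "non_separable {homothet (o' i) (\<tau> i) K | i. i < n}"
    and n0: "n > 0" and u0: "u \<noteq> 0"
    and kh: "kh \<in> K" "\<forall>k\<in>K. inner u k \<le> inner u kh"
    and kg: "kg \<in> K" "\<forall>k\<in>K. inner u kg \<le> inner u k"
    and x: "x \<in> (\<Union>i<n. homothet (o' i) (\<tau> i) K)"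
  shows "(\<Sum>i<n. \<tau> i) * inner u x \<le> (\<Sum>i<n. \<tau> i * inner u (o' i))
           + (\<Sum>i<n. \<tau> i ^ 2) * (inner u kh + inner u kg) / 2
           + (\<Sum>i<n. \<tau> i) ^ 2 * (inner u kh - inner u kg) / 2"
proof -
  define h where "h = inner u kh"
  define g where "g = inner u kg"
  define p where "p i = inner u (o' i)" for i
  define w where "w = (h - g) / 2"
  define e where "e i = p i + \<tau> i * (h + g) / 2" for i
  define I where "I = {..<n}"
  define T where "T = (\<Sum>i<n. \<tau> i)"
  have gh: "g \<le> h" using kh kg h_def g_def by auto
  have ae: "e i - \<tau> i * w = p i + \<tau> i * g" for i unfolding e_def w_def by (simp add: field_simps)
  have be: "e i + \<tau> i * w = p i + \<tau> i * h" for i unfolding e_def w_def by (simp add: field_simps)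
  have fI: "finite I" "I \<noteq> {}" using n0 I_def by auto
  define m where "m = Min ((\<lambda>i. p i + \<tau> i * g) ` I)"
  define M where "M = Max ((\<lambda>i. p i + \<tau> i * h) ` I)"
  have "m \<in> (\<lambda>i. p i + \<tau> i * g) ` I" unfolding m_def using fI by simp
  then obtain i1 where i1: "i1 \<in> I" "p i1 + \<tau> i1 * g = m" by auto
  have "M \<in> (\<lambda>i. p i + \<tau> i * h) ` I" unfolding M_def using fI by simp
  then obtain i2 where i2: "i2 \<in> I" "p i2 + \<tau> i2 * h = M" by auto
  have mle: "\<And>i. i \<in> I \<Longrightarrow> m \<le> p i + \<tau> i * g" using fI m_def by simp
  have Mge: "\<And>i. i \<in> I \<Longrightarrow> p i + \<tau> i * h \<le> M" using fI M_def by simp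
  have tI: "\<And>i. i \<in> I \<Longrightarrow> \<tau> i > 0" using tpos I_def by auto
  have ab: "\<And>i. i \<in> I \<Longrightarrow> p i + \<tau> i * g \<le> p i + \<tau> i * h"
    using tI gh by (simp add: mult_left_mono less_imp_le)
  have mM: "m \<le> M" using mle[OF i1(1)] ab[OF i1(1)] Mge[OF i1(1)] by linarith
  define U where "U = \<Union>{homothet (o' i) (\<tau> i) K | i. i < n}"
  define ym where "ym = o' i1 + \<tau> i1 *\<^sub>R kg"
  define yM where "yM = o' i2 + \<tau> i2 *\<^sub>R kh"
  have ymU: "ym \<in> U" unfolding U_def ym_def homothet_def using i1 kg I_def by blast
  have yMU: "yM \<in> U" unfolding U_def yM_def homothet_def using i2 kh I_def by blast
  have uym: "inner u ym = m" unfolding ym_def using i1 p_def g_def by (simp add: inner_add_right)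
  have uyM: "inner u yM = M" unfolding yM_def using i2 p_def h_def by (simp add: inner_add_right)
  have cover: "\<forall>s. m \<le> s \<and> s \<le> M \<longrightarrow> (\<exists>i\<in>I. e i - \<tau> i * w \<le> s \<and> s \<le> e i + \<tau> i * w)"
  proof (intro allI impI)
    fix s assume s: "m \<le> s \<and> s \<le> M"
    define \<theta> where "\<theta> = (if M = m then 0 else (s - m) / (M - m))"
    have th: "0 \<le> \<theta>" "\<theta> \<le> 1" using s mM unfolding \<theta>_def by (auto simp: field_simps)
    define y where "y = (1 - \<theta>) *\<^sub>R ym + \<theta> *\<^sub>R yM"
    have yH: "y \<in> convex hull U"
      unfolding y_def by (rule convexD[OF convex_convex_hull]) (use ymU yMU hull_inc th in auto)
    have "inner u y = (1 - \<theta>) * m + \<theta> * M" unfolding y_def by (simp add: inner_add_right uym uyM)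
    also have "\<dots> = s" using s mM unfolding \<theta>_def by (auto simp: field_simps)
    finally have uy: "inner u y = s" .
    have "hyperplane {z. inner u z = s}" unfolding hyperplane_def using u0 by blast
    moreover have "{z. inner u z = s} \<inter> convex hull U \<noteq> {}" using yH uy by blast
    ultimately obtain C where "C \<in> {homothet (o' i) (\<tau> i) K | i. i < n}" "{z. inner u z = s} \<inter> C \<noteq> {}"
      using ns unfolding non_separable_def U_def by blast
    then obtain i k where ik: "i < n" "k \<in> K" "inner u (o' i + \<tau> i *\<^sub>R k) = s"
      unfolding homothet_def by blast
    have iI: "i \<in> I" using ik I_def by simp
    have sp: "s = p i + \<tau> i * inner u k" using ik p_def by (simp add: inner_add_right)
    have "\<tau> i * g \<le> \<tau> i * inner u k" "\<tau> i * inner u k \<le> \<tau> i * h"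
      using kg kh ik tI[OF iI] g_def h_def by (auto intro: mult_left_mono)
    then show "\<exists>i\<in>I. e i - \<tau> i * w \<le> s \<and> s \<le> e i + \<tau> i * w" unfolding ae be using iI sp by (intro bexI[of _ i]) auto
  qed
  have L: "M - m \<le> 2 * w * sum \<tau> I \<and> sum \<tau> I * (M - w * sum \<tau> I) \<le> (\<Sum>i\<in>I. \<tau> i * e i)"
    apply (rule interval_lemma[OF fI])
    using gh w_def tI mle Mge i1 i2 cover ae be by (auto simp: less_imp_le)
  obtain i k where ik: "i < n" "k \<in> K" "x = o' i + \<tau> i *\<^sub>R k" using x unfolding homothet_def by blast
  have iI: "i \<in> I" using ik I_def by simp
  have "inner u x = p i + \<tau> i * inner u k" using ik p_def by (simp add: inner_add_right)
  also have "\<dots> \<le> p i + \<tau> i * h" using kh ik tI[OF iI] h_def by (auto intro: mult_left_mono)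
  also have "\<dots> \<le> M" using Mge iI .
  finally have uxM: "inner u x \<le> M" .
  have Tpos: "T > 0" unfolding T_def using tpos n0 by (intro sum_pos) auto
  have "T * inner u x \<le> T * M" using uxM Tpos by simp
  also have "\<dots> \<le> (\<Sum>i\<in>I. \<tau> i * e i) + T * T * w" using L T_def I_def by (simp add: algebra_simps)
  also have "(\<Sum>i\<in>I. \<tau> i * e i) = (\<Sum>i<n. \<tau> i * p i) + (\<Sum>i<n. \<tau> i ^ 2) * (h + g) / 2"
  proof -
    have "(\<Sum>i\<in>I. \<tau> i * e i) = (\<Sum>i<n. \<tau> i * p i + \<tau> i ^ 2 * ((h + g) / 2))"
      unfolding e_def I_def by (intro sum.cong) (simp_all add: algebra_simps power2_eq_square)
    also have "\<dots> = (\<Sum>i<n. \<tau> i * p i) + (\<Sum>i<n. \<tau> i ^ 2) * ((h + g) / 2)"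
      by (simp add: sum.distrib sum_distrib_right)
    finally show ?thesis by simp
  qed
  finally show ?thesis unfolding T_def w_def p_def h_def g_def by (simp add: power2_eq_square algebra_simps)
qed


theorem corollary6:
  fixes K :: "'a::euclidean_space set"
    and o' :: "nat \<Rightarrow> 'a" and \<tau> :: "nat \<Rightarrow> real" and n :: nat
  assumes "convex_body K"
    and "\<And>i. i < n \<Longrightarrow> \<tau> i > 0"
    and "non_separable {homothet (o' i) (\<tau> i) K | i. i < n}"
  shows "\<exists>t. (\<Union>i<n. homothet (o' i) (\<tau> i) K)
              \<subseteq> homothet t ((real DIM('a) + 1) / 2 * (\<Sum>i<n. \<tau> i)) K"
proof (cases "n = 0")
  case True then show ?thesis by auto
next
  case False
  then have n0: "n > 0" by simp
  have cK: "compact K" and cvK: "convex K" and neK: "K \<noteq> {}"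
    using assms(1) interior_subset unfolding convex_body_def by blast+
  obtain z where zK: "z \<in> K" and zp: "\<forall>x\<in>K. \<exists>y\<in>K. real (DIM('a)+1) *\<^sub>R z = x + real DIM('a) *\<^sub>R y"
    using asym_point[OF cK cvK neK] by blast
  define d where "d = real DIM('a)"
  define T where "T = (\<Sum>i<n. \<tau> i)"
  define Q where "Q = (\<Sum>i<n. \<tau> i ^ 2)"
  define q where "q = Q / T"
  define lam where "lam = (d + 1) / 2 * T"
  define c where "c = (1 / T) *\<^sub>R (\<Sum>i<n. \<tau> i *\<^sub>R o' i)"
  define t where "t = c - (lam - q) *\<^sub>R z"
  have Tpos: "T > 0" unfolding T_def using assms(2) n0 by (intro sum_pos) auto
  have d1: "d \<ge> 1" unfolding d_def by (simp add: Suc_leI)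
  have lpos: "lam > 0" unfolding lam_def using Tpos d1 by simp
  have Q0: "Q \<ge> 0" unfolding Q_def by (simp add: sum_nonneg)
  have "Q \<le> (\<Sum>i<n. \<tau> i * T)" unfolding Q_def power2_eq_square
  proof (rule sum_mono)
    fix i assume i: "i \<in> {..<n}"
    have "\<tau> i \<le> T" unfolding T_def using i assms(2)
      by (intro member_le_sum) (auto simp: less_imp_le)
    then show "\<tau> i * \<tau> i \<le> \<tau> i * T" using assms(2) i by (intro mult_left_mono) (auto simp: less_imp_le)
  qed
  also have "\<dots> = T * T" unfolding T_def by (simp add: sum_distrib_right[symmetric])
  finally have QT: "Q \<le> T * T" .
  have q0: "0 \<le> q" "q \<le> T" unfolding q_def using Q0 QT Tpos by (auto simp: field_simps)
  have Qq: "Q = q * T" unfolding q_def using Tpos by simp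
  show ?thesis
  proof (intro exI[of _ t] subsetI)
    fix x assume x: "x \<in> (\<Union>i<n. homothet (o' i) (\<tau> i) K)"
    define k where "k = (1 / lam) *\<^sub>R (x - t)"
    have xk: "x = t + lam *\<^sub>R k" unfolding k_def using lpos by simp
    have "k \<in> K"
    proof (rule ccontr)
      assume "k \<notin> K"
      then obtain a b where ab: "inner a k < b" "\<forall>y\<in>K. b < inner a y"
        using separating_hyperplane_closed_point[OF cvK compact_imp_closed[OF cK]] by blast
      define u where "u = - a"
      have u0: "u \<noteq> 0" using ab neK u_def by fastforce
      have ciK: "compact (inner u ` K)"
        by (rule compact_continuous_image[OF _ cK]) (intro continuous_intros)
      obtain sh where sh: "sh \<in> inner u ` K" "\<forall>s\<in>inner u ` K. s \<le> sh"
        using compact_attains_sup[OF ciK] neK by blast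
      obtain kh where kh: "kh \<in> K" "\<forall>y\<in>K. inner u y \<le> inner u kh" using sh by blast
      obtain sg where sg: "sg \<in> inner u ` K" "\<forall>s\<in>inner u ` K. sg \<le> s"
        using compact_attains_inf[OF ciK] neK by blast
      obtain kg where kg: "kg \<in> K" "\<forall>y\<in>K. inner u kg \<le> inner u y" using sg by blast
      note SB = support_bound[OF cK cvK neK assms(2) assms(3) n0 u0 kh kg x]
      obtain y where y: "y \<in> K" "real (DIM('a)+1) *\<^sub>R z = kg + real DIM('a) *\<^sub>R y"
        using zp kg(1) by blast
      have "(d + 1) * inner u z = inner u kg + d * inner u y"
        using arg_cong[OF y(2), of "inner u"] unfolding d_def by (simp add: inner_add_right add.commute)
      moreover have "inner u y \<le> inner u kh" using kh y by blast
      ultimately have zv: "(d + 1) * inner u z \<le> inner u kg + d * inner u kh"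
        using d1 by (smt (verit) mult_left_mono)
      have zh: "inner u z \<le> inner u kh" using kh zK by blast
      have uc: "(\<Sum>i<n. \<tau> i * inner u (o' i)) = T * inner u c"
        unfolding c_def using Tpos by (simp add: inner_sum_right)
      have "T * inner u x \<le> T * inner u c + q * T * (inner u kh + inner u kg) / 2
             + T ^ 2 * (inner u kh - inner u kg) / 2"
        using SB unfolding uc T_def[symmetric] Q_def[symmetric] Qq .
      from arith_final[OF Tpos q0 d1 this zv zh]
      have "inner u x \<le> inner u t + lam * inner u kh"
        unfolding t_def lam_def by (simp add: inner_diff_right)
      moreover have "inner u x = inner u t + lam * inner u k" using xk by (simp add: inner_add_right)
      moreover have "inner u kh < inner u k" using ab kh(1) u_def by fastforce
      ultimately show False using lpos by (smt (verit) mult_strict_left_mono)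
    qed
    then show "x \<in> homothet t ((real DIM('a) + 1) / 2 * (\<Sum>i<n. \<tau> i)) K"
      unfolding homothet_def using xk lam_def d_def T_def by blast
  qed
qed

end
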